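(* Let $H$ be a real Hilbert space, $C\subseteq H$ a nonempty closed convex set with metric projection $P_C$, and $F\colon H\to H$ a mapping that is monotone ($\langle F(x)-F(y),x-y\rangle\ge 0$ for all $x,y\in H$) and Lipschitz continuous with constant $L>0$. Let $S$ be the (assumed nonempty) set of solutions of the variational inequality: find $x^*\in C$ with $\langle F(x^* ),x-x^*\rangle\ge 0$ for all $x\in C$. Choose $x_0=y_0\in H$ and $\lambda\in\bigl(0,\frac{\sqrt2-1}{L}\bigr)$, and define for $n\ge 0$ $$x_{n+1}=P_C(x_n-\lambda F(y_n)),\qquad y_{n+1}=2x_{n+1}-x_n.$$ Let $z\in S$. Then for every $n\ge 2$, $$\|x_{n+1}-z\|^2\le \|x_n-z\|^2-(1-\lambda L(1+\sqrt2))\|x_n-x_{n-1}\|^2+\lambda L\|x_n-y_{n-1}\|^2-(1-\sqrt2\lambda L)\|x_{n+1}-y_n\|^2-2\lambda\langle F(z),y_n-z\rangle.$$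
   Context: $P_C(x)$ denotes the unique nearest point of $C$ to $x$. *)

theory Defs
  imports "HOL-Analysis.Analysis"
begin

definition metric_proj :: "'a::real_normed_vector set \<Rightarrow> 'a \<Rightarrow> 'a" where
  "metric_proj C x = (THE p. p \<in> C \<and> (\<forall>c\<in>C. dist x p \<le> dist x c))"

definition monotone_op :: "('a::real_inner \<Rightarrow> 'a) \<Rightarrow> bool" where
  "monotone_op F \<longleftrightarrow> (\<forall>x y. inner (F x - F y) (x - y) \<ge> 0)"

definition VI_sol :: "'a::real_inner set \<Rightarrow> ('a \<Rightarrow> 'a) \<Rightarrow> 'a set" where
  "VI_sol C F = {xs \<in> C. \<forall>x\<in>C. inner (F xs) (x - xs) \<ge> 0}"

end

theory Submission
  imports Defs
begin

lemma near_point: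
  fixes C :: "'a::real_normed_vector set"
  assumes "C \<noteq> {}" "infdist a C < t"
  shows "\<exists>s\<in>C. dist a s < t"
proof (rule ccontr)
  assume "\<not> ?thesis"
  then have "\<forall>s\<in>C. t \<le> dist a s" by (auto simp: not_less)
  then have "t \<le> (INF s\<in>C. dist a s)" using assms(1) by (intro cINF_greatest) auto
  moreover have "infdist a C = (INF s\<in>C. dist a s)" by (rule infdist_notempty[OF assms(1)])
  ultimately show False using assms(2) by linarith
qed

lemma para:
  fixes X Y :: "'a::real_inner"
  shows "(norm (X - Y))^2 = 2 * (norm X)^2 + 2 * (norm Y)^2 - (norm (X + Y))^2"
  unfolding power2_norm_eq_inner
  by (simp add: inner_add_left inner_add_right inner_diff_left inner_diff_right inner_commute)

lemma proj_exists:
  fixes C :: "'a::{real_inner, complete_space} set"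
  assumes ne: "C \<noteq> {}" and cl: "closed C" and cv: "convex C"
  shows "\<exists>p\<in>C. \<forall>c\<in>C. dist a p \<le> dist a c"
proof -
  define d where "d = infdist a C"
  have d0: "d \<ge> 0" unfolding d_def by (rule infdist_nonneg)
  have dle: "\<And>c. c \<in> C \<Longrightarrow> d \<le> dist a c" unfolding d_def by (rule infdist_le)
  have "\<forall>k. \<exists>s. s \<in> C \<and> dist a s < sqrt (d^2 + inverse (real (Suc k)))"
  proof
    fix k
    have "d < sqrt (d^2 + inverse (real (Suc k)))"
      by (intro real_less_rsqrt) simp
    then show "\<exists>s. s \<in> C \<and> dist a s < sqrt (d^2 + inverse (real (Suc k)))"
      using near_point[OF ne] unfolding d_def by blast
  qed
  then obtain s where sAll: "\<forall>k. s k \<in> C \<and> dist a (s k) < sqrt (d^2 + inverse (real (Suc k)))"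
    by (rule choice[THEN exE])
  then have sC: "\<And>k. s k \<in> C"
    and sd: "\<And>k. dist a (s k) < sqrt (d^2 + inverse (real (Suc k)))" by auto
  have sd2: "(dist a (s k))^2 \<le> d^2 + inverse (real (Suc k))" for k
  proof -
    have "(dist a (s k))^2 \<le> (sqrt (d^2 + inverse (real (Suc k))))^2"
      using sd[of k] by (intro power_mono) auto
    then show ?thesis by simp
  qed
  have par: "(norm (s m - s n))^2 \<le> 2 * inverse (real (Suc m)) + 2 * inverse (real (Suc n))" for m n
  proof -
    have mid: "(1/2) *\<^sub>R s m + (1/2) *\<^sub>R s n \<in> C"
      using cv sC by (intro convexD) auto
    have "d^2 \<le> (dist a ((1/2) *\<^sub>R s m + (1/2) *\<^sub>R s n))^2"
      using dle[OF mid] d0 by (intro power_mono) auto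
    moreover have "(norm (s m - s n))^2 = 2 * (dist a (s m))^2 + 2 * (dist a (s n))^2
        - 4 * (dist a ((1/2) *\<^sub>R s m + (1/2) *\<^sub>R s n))^2"
    proof -
      have e1: "(a - s n) - (a - s m) = s m - s n" by simp
      have e2: "(a - s n) + (a - s m) = 2 *\<^sub>R (a - ((1/2) *\<^sub>R s m + (1/2) *\<^sub>R s n))"
        by (simp add: algebra_simps scaleR_2)
      have "norm ((a - s n) + (a - s m)) = 2 * dist a ((1/2) *\<^sub>R s m + (1/2) *\<^sub>R s n)"
        unfolding e2 by (simp add: dist_norm)
      then show ?thesis using para[of "a - s n" "a - s m"] unfolding e1
        by (simp add: dist_norm power_mult_distrib)
    qed
    ultimately show ?thesis using sd2[of m] sd2[of n] by linarith
  qed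
  have "Cauchy s"
  proof (rule metric_CauchyI)
    fix e :: real assume e: "e > 0"
    obtain N :: nat where N: "inverse (e^2 / 4) < real N"
      using reals_Archimedean2 by blast
    have "4 * inverse (real (Suc N)) < e^2"
    proof -
      have pe: "e^2/4 > 0" using e by simp
      have "inverse (real (Suc N)) < inverse (inverse (e^2/4))"
        using N pe by (intro less_imp_inverse_less) auto
      then show ?thesis using pe by simp
    qed
    show "\<exists>M. \<forall>m\<ge>M. \<forall>n\<ge>M. dist (s m) (s n) < e"
    proof (intro exI allI impI)
      fix m n assume mn: "N \<le> m" "N \<le> n"
      have "inverse (real (Suc m)) \<le> inverse (real (Suc N))"
        using mn by (intro le_imp_inverse_le) auto
      moreover have "inverse (real (Suc n)) \<le> inverse (real (Suc N))"
        using mn by (intro le_imp_inverse_le) auto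
      ultimately have "(dist (s m) (s n))^2 < e^2"
        using par[of m n] \<open>4 * inverse (real (Suc N)) < e^2\<close> unfolding dist_norm by linarith
      then show "dist (s m) (s n) < e" using e by (simp add: power_less_imp_less_base)
    qed
  qed
  then have "convergent s" by (rule Cauchy_convergent)
  then obtain p where lim: "s \<longlonglongrightarrow> p" unfolding convergent_def by blast
  have pC: "p \<in> C" using sC by (intro closed_sequentially[OF cl _ lim]) auto
  have l1: "(\<lambda>k. dist a (s k)) \<longlonglongrightarrow> dist a p" using lim by (intro tendsto_intros)
  have l2: "(\<lambda>k. sqrt (d^2 + inverse (real (Suc k)))) \<longlonglongrightarrow> sqrt (d^2 + 0)"
    by (intro tendsto_intros LIMSEQ_inverse_real_of_nat)
  have "dist a p \<le> sqrt (d^2 + 0)"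
    using l1 l2 sd by (intro LIMSEQ_le) (auto intro: less_imp_le)
  then have pd: "dist a p \<le> d" using d0 by simp
  show ?thesis
  proof (intro bexI[of _ p] ballI)
    fix c assume "c \<in> C"
    then show "dist a p \<le> dist a c" using dle[of c] pd by linarith
  qed (rule pC)
qed

lemma proj_props:
  fixes C :: "'a::{real_inner, complete_space} set"
  assumes ne: "C \<noteq> {}" and cl: "closed C" and cv: "convex C" and c: "c \<in> C"
  shows "metric_proj C u \<in> C" "inner (u - metric_proj C u) (c - metric_proj C u) \<le> 0"
proof -
  have ex: "\<exists>!p. p \<in> C \<and> (\<forall>c\<in>C. dist u p \<le> dist u c)"
    using proj_exists[OF ne cl cv, of u] any_closest_point_unique[OF cv cl] by blast
  have P: "metric_proj C u \<in> C \<and> (\<forall>c\<in>C. dist u (metric_proj C u) \<le> dist u c)"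
    unfolding metric_proj_def by (rule theI'[OF ex])
  then show "metric_proj C u \<in> C" by simp
  show "inner (u - metric_proj C u) (c - metric_proj C u) \<le> 0"
    using P any_closest_point_dot[OF cv cl _ c] by blast
qed

lemma inner_tri:
  fixes a b c :: "'a::real_inner"
  shows "2 * inner (a - b) (c - b) = (norm (a - b))^2 + (norm (c - b))^2 - (norm (a - c))^2"
proof -
  have "inner (a - b) (c - b) = ((norm (a - b))^2 + (norm (c - b))^2 - (norm ((a - b) - (c - b)))^2) / 2"
    by (rule dot_norm_neg)
  moreover have "(a - b) - (c - b) = a - c" by simp
  ultimately show ?thesis by simp
qed

lemma lin_aux:
  fixes t1 t2 t3 t4 t5 t6 :: real
  assumes "t1 - t2 \<le> 0" "t2 = - t3" "2 * t1 = t4 + t5 - t6" shows "t5 \<le> t6 - t4 - 2 * t3"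
  using assms by linarith

lemma key_ineq:
  fixes a b c :: real
  shows "2 * ((a + b) * c) \<le> (1 + sqrt 2) * a^2 + b^2 + sqrt 2 * c^2"
proof -
  define r where "r = sqrt 2"
  have r2: "r^2 = 2" unfolding r_def by simp
  have rp: "r > 0" unfolding r_def by simp
  have r1: "r > 1" unfolding r_def by simp
  have id: "(a + b - r*c)^2 + (r - 1) * ((r+1)*a - b)^2
     = r * ((1+r)*a^2+b^2+r*c^2 - 2*((a+b)*c)) + (r^2 - 2) * (r*a^2 - 2*a*b)"
    by algebra
  have "0 \<le> (a + b - r*c)^2 + (r - 1) * ((r+1)*a - b)^2"
    using r1 by (intro add_nonneg_nonneg mult_nonneg_nonneg) auto
  then have "0 \<le> r * ((1+r)*a^2+b^2+r*c^2 - 2*((a+b)*c))" using id r2 by simp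
  then have "0 \<le> (1+r)*a^2+b^2+r*c^2 - 2*((a+b)*c)" using rp by (simp add: zero_le_mult_iff)
  then show ?thesis unfolding r_def by linarith
qed

theorem lemma3p2:
  fixes C :: "'a::{real_inner, complete_space} set"
    and F :: "'a \<Rightarrow> 'a" and L lam :: real
    and x y :: "nat \<Rightarrow> 'a" and z :: 'a and n :: nat
  assumes "C \<noteq> {}" and "closed C" and "convex C"
    and "monotone_op F"
    and "L > 0" and "L-lipschitz_on UNIV F"
    and "VI_sol C F \<noteq> {}"
    and "x 0 = y 0"
    and "lam > 0" and "lam < (sqrt 2 - 1) / L"
    and "\<And>k. x (Suc k) = metric_proj C (x k - lam *\<^sub>R F (y k))"
    and "\<And>k. y (Suc k) = 2 *\<^sub>R x (Suc k) - x k"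
    and "z \<in> VI_sol C F"
    and "n \<ge> 2"
  shows "(norm (x (Suc n) - z))\<^sup>2 \<le> (norm (x n - z))\<^sup>2
           - (1 - lam * L * (1 + sqrt 2)) * (norm (x n - x (n - 1)))\<^sup>2
           + lam * L * (norm (x n - y (n - 1)))\<^sup>2
           - (1 - sqrt 2 * lam * L) * (norm (x (Suc n) - y n))\<^sup>2
           - 2 * lam * inner (F z) (y n - z)"
proof -
  have ne: "C \<noteq> {}" and cl: "closed C" and cv: "convex C" using assms by auto
  define p where "p = x (Suc n)"
  define q where "q = x n"
  define r where "r = x (n - 1)"
  define u where "u = y n"
  define v where "v = y (n - 1)"
  have nS: "n = Suc (n - 1)" using assms(14) by simp
  have n1S: "n - 1 = Suc (n - 2)" using assms(14) by simp
  have zC: "z \<in> C" and zvi: "\<forall>c\<in>C. inner (F z) (c - z) \<ge> 0"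
    using assms(13) unfolding VI_sol_def by auto
  have rC: "r \<in> C" unfolding r_def using n1S assms(11)[of "n - 2"] proj_props(1)[OF ne cl cv zC] by metis
  have pC: "p \<in> C" unfolding p_def using assms(11)[of n] proj_props(1)[OF ne cl cv zC] by metis
  have qdef: "q = metric_proj C (r - lam *\<^sub>R F v)"
    unfolding q_def r_def v_def using assms(11)[of "n - 1"] nS by metis
  have udef: "u = 2 *\<^sub>R q - r"
    unfolding u_def q_def r_def using assms(12)[of "n - 1"] nS by metis
  have h1: "inner (q - lam *\<^sub>R F u - p) (z - p) \<le> 0"
    unfolding p_def q_def u_def using assms(11)[of n] proj_props(2)[OF ne cl cv zC] by metis
  have h2: "inner (r - lam *\<^sub>R F v - q) (p - q) \<le> 0"
    unfolding qdef by (rule proj_props(2)[OF ne cl cv pC])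
  have h3: "inner (r - lam *\<^sub>R F v - q) (r - q) \<le> 0"
    unfolding qdef by (rule proj_props(2)[OF ne cl cv rC])
  have h4: "inner (F u - F z) (u - z) \<ge> 0" using assms(4) unfolding monotone_op_def by blast
  have h5: "norm (F u - F v) \<le> L * norm (u - v)"
    using lipschitz_onD[OF assms(6), of u v] by (simp add: dist_norm)
  have h6: "inner (F u - F v) (p - u) \<ge> - (norm (F u - F v) * norm (p - u))"
    using Cauchy_Schwarz_ineq2[of "F u - F v" "p - u"] by linarith
  have urq: "u - q = q - r" using udef by (simp add: algebra_simps scaleR_2)
  have h7: "norm (u - v) \<le> norm (q - r) + norm (q - v)"
  proof -
    have "u - v = (u - q) + (q - v)" by simp
    also have "\<dots> = (q - r) + (q - v)" by (simp only: urq)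
    finally show ?thesis by (simp only: norm_triangle_ineq)
  qed
  define a where "a = norm (q - r)"
  define b where "b = norm (q - v)"
  define c where "c = norm (p - u)"
  have abc: "0 \<le> a" "0 \<le> b" "0 \<le> c" unfolding a_def b_def c_def by auto
  have A: "(norm (p - z))^2 \<le> (norm (q - z))^2 - (norm (p - q))^2 - 2 * (lam * inner (F u) (p - z))"
  proof -
    have "inner (q - p) (z - p) - lam * inner (F u) (z - p) \<le> 0"
      using h1 by (simp add: inner_diff_left)
    moreover have "lam * inner (F u) (z - p) = - (lam * inner (F u) (p - z))"
      by (simp add: inner_diff_right algebra_simps)
    moreover have "2 * inner (q - p) (z - p) = (norm (p - q))^2 + (norm (p - z))^2 - (norm (q - z))^2"
      using inner_tri[of q p z] by (simp add: norm_minus_commute[of p q] norm_minus_commute[of z p])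
    ultimately show ?thesis by (rule lin_aux)
  qed
  have B: "inner (F u) (p - z) = inner (F u - F v) (p - u) + inner (F v) (p - q)
       - inner (F v) (u - q) + inner (F u) (u - z)"
    by (simp add: inner_diff_left inner_diff_right)
  have B': "lam * inner (F u) (p - z) = lam * inner (F u - F v) (p - u) + lam * inner (F v) (p - q)
       - lam * inner (F v) (u - q) + lam * inner (F u) (u - z)"
    unfolding B by (simp only: distrib_left right_diff_distrib)
  have C2: "- 2 * (lam * inner (F v) (p - q)) \<le> 2 * inner (u - q) (p - q)"
  proof -
    have "inner (r - q) (p - q) - lam * inner (F v) (p - q) \<le> 0"
      using h2 by (simp add: inner_diff_left)
    moreover have "inner (r - q) (p - q) = - inner (u - q) (p - q)"
      using urq by (metis inner_minus_left minus_diff_eq)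
    ultimately show ?thesis by linarith
  qed
  have C3: "2 * (lam * inner (F v) (u - q)) \<le> - 2 * a^2"
  proof -
    have "inner (r - q) (r - q) - lam * inner (F v) (r - q) \<le> 0"
      using h3 by (simp add: inner_diff_left)
    moreover have "lam * inner (F v) (r - q) = - (lam * inner (F v) (u - q))"
      using urq by (metis inner_minus_right minus_diff_eq mult_minus_right)
    moreover have "inner (r - q) (r - q) = a^2" unfolding a_def
      by (simp add: power2_norm_eq_inner norm_minus_commute[of q r])
    ultimately show ?thesis by linarith
  qed
  have C4: "- 2 * (lam * inner (F u) (u - z)) \<le> - 2 * (lam * inner (F z) (u - z))"
  proof -
    have "inner (F u) (u - z) \<ge> inner (F z) (u - z)" using h4 by (simp add: inner_diff_left)
    then show ?thesis using assms(9) by simp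
  qed
  have C6: "- 2 * (lam * inner (F u - F v) (p - u)) \<le> 2 * (lam * L * ((a + b) * c))"
  proof -
    have "norm (F u - F v) * norm (p - u) \<le> L * (a + b) * c"
      unfolding c_def a_def b_def using h5 h7 assms(5)
      by (meson mult_left_mono mult_right_mono norm_ge_zero order_trans less_imp_le)
    then have "- inner (F u - F v) (p - u) \<le> L * (a + b) * c" using h6 by linarith
    then have "lam * (- inner (F u - F v) (p - u)) \<le> lam * (L * (a + b) * c)"
      using assms(9) by (intro mult_left_mono) auto
    moreover have "lam * (L * (a + b) * c) = lam * L * ((a + b) * c)" by (simp only: mult.assoc)
    ultimately have "- (lam * inner (F u - F v) (p - u)) \<le> lam * L * ((a + b) * c)"
      by (simp only: mult_minus_right)
    then show ?thesis by linarith
  qed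
  have D: "2 * inner (u - q) (p - q) - (norm (p - q))^2 = a^2 - c^2"
  proof -
    have "2 * inner (u - q) (p - q) = (norm (u - q))^2 + (norm (p - q))^2 - (norm (u - p))^2"
      by (rule inner_tri)
    moreover have "norm (u - q) = a" unfolding a_def urq ..
    moreover have "norm (u - p) = c" unfolding c_def by (rule norm_minus_commute)
    ultimately show ?thesis by simp
  qed
  have K: "lam * L * (2 * ((a + b) * c)) \<le> lam * L * ((1 + sqrt 2) * a^2 + b^2 + sqrt 2 * c^2)"
    using key_ineq[of a b c] assms(5,9) by (intro mult_left_mono) auto
  have K1: "lam * L * (2 * ((a + b) * c)) = 2 * (lam * L * ((a + b) * c))" by simp
  have K2: "lam * L * ((1 + sqrt 2) * a^2 + b^2 + sqrt 2 * c^2)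
      = lam * L * (1 + sqrt 2) * a^2 + lam * L * b^2 + sqrt 2 * lam * L * c^2"
    by (simp add: algebra_simps)
  have G: "(norm (q - z))^2 - (1 - lam * L * (1 + sqrt 2)) * a^2
      + lam * L * b^2 - (1 - sqrt 2 * lam * L) * c^2 - 2 * lam * inner (F z) (u - z)
      = (norm (q - z))^2 - a^2 + lam * L * (1 + sqrt 2) * a^2 + lam * L * b^2 - c^2
        + sqrt 2 * lam * L * c^2 - 2 * (lam * inner (F z) (u - z))"
    by (simp add: algebra_simps)
  have fin: "(norm (p - z))^2 \<le> (norm (q - z))^2 - (1 - lam * L * (1 + sqrt 2)) * a^2
      + lam * L * b^2 - (1 - sqrt 2 * lam * L) * c^2 - 2 * lam * inner (F z) (u - z)"
    unfolding G using A B' C2 C3 C4 C6 D K K1 K2 by linarith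
  show ?thesis using fin unfolding p_def q_def u_def a_def b_def c_def r_def v_def .
qed

end
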